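(* Let $n\ge2$, $p\in(0,1)$, $r:=p^2+(1-p)^2$, and let $R$ be any fixed set of $k$ vertices of $\{1,\dots,n\}$ with $k\ge\frac{-3\ln n}{\ln r}$. Then $R$ is a resolving set of $G_{n,p}$ with probability at least $1-\frac{1}{2n}$. In particular, $\beta(G_{n,p})\le\big\lceil\frac{-3\ln n}{\ln r}\big\rceil$ with probability tending to $1$ as $n\to\infty$.
   Context: $G_{n,p}$ is the Erdős–Rényi random graph on vertex set $\{1,\dots,n\}$ in which each pair of distinct vertices is adjacent independently with probability $p$. A set $R$ of vertices of a graph $G$ is resolving if for all distinct vertices $u,v$ there is $w\in R$ with $d(u,w)\ne d(v,w)$, where $d$ is shortest-path distance ($\infty$ between different components). $\beta(G)$ is the minimum size of a resolving set. *)

theory Defs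
  imports Complex_Main "HOL-Library.Extended_Nat"
begin

text \<open>Vertex set {1..n}; a graph on it is a set of edges, each a 2-element set {u,v}.\<close>

definition all_pairs :: "nat \<Rightarrow> nat set set" where
  "all_pairs n = {e. \<exists>u v. u \<in> {1..n} \<and> v \<in> {1..n} \<and> u \<noteq> v \<and> e = {u, v}}"

text \<open>Probability under G(n,p) of the event P (a predicate on edge sets):
  each pair is an edge independently with probability p.\<close>
definition gnp_prob :: "nat \<Rightarrow> real \<Rightarrow> (nat set set \<Rightarrow> bool) \<Rightarrow> real" where
  "gnp_prob n p P = (\<Sum>E\<in>{E. E \<subseteq> all_pairs n \<and> P E}.
      p ^ card E * (1 - p) ^ (card (all_pairs n) - card E))"

definition adj_rel :: "nat set set \<Rightarrow> (nat \<times> nat) set" where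
  "adj_rel E = {(u, v). u \<noteq> v \<and> {u, v} \<in> E}"

definition gdist :: "nat set set \<Rightarrow> nat \<Rightarrow> nat \<Rightarrow> enat" where
  "gdist E u v = (if \<exists>k. (u, v) \<in> (adj_rel E) ^^ k
                  then enat (LEAST k. (u, v) \<in> (adj_rel E) ^^ k) else \<infinity>)"

definition resolving :: "nat \<Rightarrow> nat set set \<Rightarrow> nat set \<Rightarrow> bool" where
  "resolving n E R \<longleftrightarrow> R \<subseteq> {1..n} \<and>
     (\<forall>u\<in>{1..n}. \<forall>v\<in>{1..n}. u \<noteq> v \<longrightarrow> (\<exists>w\<in>R. gdist E u w \<noteq> gdist E v w))"

definition metric_dim :: "nat \<Rightarrow> nat set set \<Rightarrow> nat" where
  "metric_dim n E = (LEAST k. \<exists>R. resolving n E R \<and> card R = k)"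

end

theory Submission
  imports Defs
begin


definition mu :: "'a set \<Rightarrow> real \<Rightarrow> ('a set \<Rightarrow> bool) \<Rightarrow> real" where
 "mu A p P = (\<Sum>E\<in>{E. E \<subseteq> A \<and> P E}. p ^ card E * (1 - p) ^ (card A - card E))"

lemma mu_cong: "(\<And>E. E \<subseteq> A \<Longrightarrow> P E = Q E) \<Longrightarrow> mu A p P = mu A p Q"
  unfolding mu_def by (rule sum.cong) auto

lemma mu_insert:
  assumes fin: "finite A" and a: "a \<notin> A"
  shows "mu (insert a A) p P = p * mu A p (\<lambda>E. P (insert a E)) + (1 - p) * mu A p P"
proof -
  define f where "f = (\<lambda>E::'a set. p ^ card E * (1 - p) ^ (card A - card E))"
  define g where "g = (\<lambda>E::'a set. p ^ card E * (1 - p) ^ (card (insert a A) - card E))"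
  let ?S1 = "{E. E \<subseteq> A \<and> P E}"
  let ?T = "{E. E \<subseteq> A \<and> P (insert a E)}"
  have finS1: "finite ?S1" by (rule finite_subset[of _ "Pow A"]) (use fin in auto)
  have finT: "finite ?T" by (rule finite_subset[of _ "Pow A"]) (use fin in auto)
  have eq: "{E. E \<subseteq> insert a A \<and> P E} = ?S1 \<union> insert a ` ?T"
  proof (rule set_eqI, rule iffI)
    fix x assume x: "x \<in> {E. E \<subseteq> insert a A \<and> P E}"
    show "x \<in> ?S1 \<union> insert a ` ?T"
    proof (cases "a \<in> x")
      case True
      then have "x = insert a (x - {a})" by auto
      moreover have "x - {a} \<in> ?T" using x True \<open>x = insert a (x - {a})\<close> by auto
      ultimately show ?thesis by blast
    next
      case False then show ?thesis using x by auto
    qed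
  next
    fix x assume "x \<in> ?S1 \<union> insert a ` ?T"
    then show "x \<in> {E. E \<subseteq> insert a A \<and> P E}" by auto
  qed
  have disj: "?S1 \<inter> insert a ` ?T = {}" using a by auto
  have inj: "inj_on (insert a) ?T"
    unfolding inj_on_def using a by (metis (no_types, lifting) insert_ident mem_Collect_eq subsetD)
  have cA: "card (insert a A) = Suc (card A)" using fin a by simp
  have s2: "sum g (insert a ` ?T) = p * sum f ?T"
  proof -
    have "sum g (insert a ` ?T) = sum (g \<circ> insert a) ?T" by (rule sum.reindex[OF inj])
    also have "\<dots> = sum (\<lambda>E. p * f E) ?T"
    proof (rule sum.cong[OF refl])
      fix E assume E: "E \<in> ?T"
      then have "finite E" "a \<notin> E" using fin a finite_subset by auto
      then have "card (insert a E) = Suc (card E)" by simp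
      then show "(g \<circ> insert a) E = p * f E" unfolding g_def f_def using cA by simp
    qed
    finally show ?thesis by (simp add: sum_distrib_left)
  qed
  have s1: "sum g ?S1 = (1 - p) * sum f ?S1"
  proof -
    have "sum g ?S1 = sum (\<lambda>E. (1 - p) * f E) ?S1"
    proof (rule sum.cong[OF refl])
      fix E assume E: "E \<in> ?S1"
      then have "card E \<le> card A" using fin card_mono by auto
      then have "card (insert a A) - card E = Suc (card A - card E)" using cA by simp
      then show "g E = (1 - p) * f E" unfolding g_def f_def by simp
    qed
    then show ?thesis by (simp add: sum_distrib_left)
  qed
  have "mu (insert a A) p P = sum g ?S1 + sum g (insert a ` ?T)"
    unfolding mu_def g_def[symmetric] eq
    by (rule sum.union_disjoint) (use finS1 finT disj in auto)
  also have "\<dots> = p * mu A p (\<lambda>E. P (insert a E)) + (1 - p) * mu A p P"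
    unfolding s1 s2 mu_def f_def by simp
  finally show ?thesis .
qed


lemma mu_empty: "mu {} p P = (if P {} then 1 else 0)"
proof -
  have "{E. E \<subseteq> {} \<and> P E} = (if P {} then {{}} else {})" by auto
  then show ?thesis unfolding mu_def by simp
qed

lemma mu_False: "mu A p (\<lambda>_. False) = 0" unfolding mu_def by simp

lemma mu_True: "finite A \<Longrightarrow> mu A p (\<lambda>_. True) = 1"
proof (induction A rule: finite_induct)
  case empty then show ?case by (simp add: mu_empty)
next
  case (insert x F) then show ?case by (simp add: mu_insert)
qed

lemma mu_nonneg: "0 \<le> p \<Longrightarrow> p \<le> 1 \<Longrightarrow> 0 \<le> mu A p P"
  unfolding mu_def by (intro sum_nonneg) auto

lemma mu_mono:
  assumes "0 \<le> p" "p \<le> 1" "finite A" "\<And>E. E \<subseteq> A \<Longrightarrow> P E \<Longrightarrow> Q E"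
  shows "mu A p P \<le> mu A p Q"
  unfolding mu_def
proof (rule sum_mono2)
  show "finite {E. E \<subseteq> A \<and> Q E}" by (rule finite_subset[of _ "Pow A"]) (use assms in auto)
qed (use assms in auto)

lemma mu_add: "finite A \<Longrightarrow>
   mu A p (\<lambda>E. P E \<or> Q E) + mu A p (\<lambda>E. P E \<and> Q E) = mu A p P + mu A p Q"
proof (induction A arbitrary: P Q rule: finite_induct)
  case empty then show ?case by (simp add: mu_empty)
next
  case (insert x F)
  have a: "mu F p (\<lambda>E. P (insert x E) \<or> Q (insert x E)) + mu F p (\<lambda>E. P (insert x E) \<and> Q (insert x E))
     = mu F p (\<lambda>E. P (insert x E)) + mu F p (\<lambda>E. Q (insert x E))" by (rule insert.IH)
  have b: "mu F p (\<lambda>E. P E \<or> Q E) + mu F p (\<lambda>E. P E \<and> Q E) = mu F p P + mu F p Q" by (rule insert.IH)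
  have a': "p * mu F p (\<lambda>E. P (insert x E) \<or> Q (insert x E)) + p * mu F p (\<lambda>E. P (insert x E) \<and> Q (insert x E))
     = p * mu F p (\<lambda>E. P (insert x E)) + p * mu F p (\<lambda>E. Q (insert x E))"
    using arg_cong[OF a, of "\<lambda>t. p * t"] by (simp only: distrib_left)
  have b': "(1-p) * mu F p (\<lambda>E. P E \<or> Q E) + (1-p) * mu F p (\<lambda>E. P E \<and> Q E) = (1-p) * mu F p P + (1-p) * mu F p Q"
    using arg_cong[OF b, of "\<lambda>t. (1-p) * t"] by (simp only: distrib_left)
  show ?case using insert(1,2) a' b' by (simp add: mu_insert)
qed

lemma mu_compl: "finite A \<Longrightarrow> mu A p P + mu A p (\<lambda>E. \<not> P E) = 1"
  using mu_add[of A p P "\<lambda>E. \<not> P E"] by (simp add: mu_True mu_False)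

lemma mu_Ex_le:
  assumes "0 \<le> p" "p \<le> 1" "finite A"
  shows "finite I \<Longrightarrow> mu A p (\<lambda>E. \<exists>i\<in>I. P i E) \<le> (\<Sum>i\<in>I. mu A p (P i))"
proof (induction I rule: finite_induct)
  case empty then show ?case by (simp add: mu_False)
next
  case (insert x F)
  have "mu A p (\<lambda>E. \<exists>i\<in>insert x F. P i E) = mu A p (\<lambda>E. P x E \<or> (\<exists>i\<in>F. P i E))" by simp
  also have "\<dots> \<le> mu A p (P x) + mu A p (\<lambda>E. \<exists>i\<in>F. P i E)"
    using mu_add[OF assms(3), of p "P x" "\<lambda>E. \<exists>i\<in>F. P i E"] mu_nonneg[OF assms(1,2)] by smt
  also have "\<dots> \<le> (\<Sum>i\<in>insert x F. mu A p (P i))" using insert by simp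
  finally show ?case .
qed

lemma mu_restrict:
  assumes "finite C" "finite B" "B \<inter> C = {}" "\<And>c E. c \<in> C \<Longrightarrow> P (insert c E) = P E"
  shows "mu (B \<union> C) p P = mu B p P"
  using assms(1,3,4)
proof (induction C rule: finite_induct)
  case empty then show ?case by simp
next
  case (insert x F)
  have "mu (B \<union> insert x F) p P = mu (insert x (B \<union> F)) p P" by simp
  also have "\<dots> = p * mu (B \<union> F) p (\<lambda>E. P (insert x E)) + (1 - p) * mu (B \<union> F) p P"
    by (rule mu_insert) (use insert assms(2) in auto)
  also have "\<dots> = mu (B \<union> F) p P" using insert.prems(2) by (simp add: algebra_simps)
  finally show ?case using insert by auto
qed

definition bad :: "nat \<Rightarrow> nat \<Rightarrow> nat set \<Rightarrow> nat set set \<Rightarrow> bool" where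
  "bad u v W E \<longleftrightarrow> (\<forall>w\<in>W. ({u,w} \<in> E \<longleftrightarrow> {v,w} \<in> E))"

definition Bset :: "nat \<Rightarrow> nat \<Rightarrow> nat set \<Rightarrow> nat set set" where
  "Bset u v W = (\<lambda>w. {u,w}) ` W \<union> (\<lambda>w. {v,w}) ` W"

lemma aux_aB: "u \<noteq> v \<Longrightarrow> u \<notin> insert w F \<Longrightarrow> v \<notin> insert w F \<Longrightarrow> w \<notin> F \<Longrightarrow>
  {u,w} \<notin> insert {v,w} (Bset u v F)"
  unfolding Bset_def apply (simp add: doubleton_eq_iff image_iff) 
  done
lemma aux_bB: "u \<noteq> v \<Longrightarrow> u \<notin> insert w F \<Longrightarrow> v \<notin> insert w F \<Longrightarrow> w \<notin> F \<Longrightarrow>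
  {v,w} \<notin> Bset u v F"
  unfolding Bset_def apply (simp add: doubleton_eq_iff image_iff) 
  done
lemma aux_X: "u \<noteq> v \<Longrightarrow> u \<notin> insert w F \<Longrightarrow> v \<notin> insert w F \<Longrightarrow> w \<notin> F \<Longrightarrow> X \<subseteq> {{u,w},{v,w}} \<Longrightarrow> x \<in> F \<Longrightarrow> {u,x} \<notin> X \<and> {v,x} \<notin> X"
proof -
  assume a: "u \<noteq> v" "u \<notin> insert w F" "v \<notin> insert w F" "w \<notin> F" "X \<subseteq> {{u,w},{v,w}}" "x \<in> F"
  have "{u,x} \<noteq> {u,w}" "{u,x} \<noteq> {v,w}" "{v,x} \<noteq> {u,w}" "{v,x} \<noteq> {v,w}"
    using a by (simp_all add: doubleton_eq_iff, blast+)
  then show ?thesis using a(5) by blast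
qed

lemma mu_bad:
  assumes "u \<noteq> v"
  shows "finite W \<Longrightarrow> u \<notin> W \<Longrightarrow> v \<notin> W \<Longrightarrow> mu (Bset u v W) p (bad u v W) = (p^2 + (1-p)^2) ^ card W"
proof (induction W rule: finite_induct)
  case empty then show ?case by (simp add: Bset_def bad_def mu_empty)
next
  case (insert w F)
  let ?a = "{u,w}" and ?b = "{v,w}" and ?B = "Bset u v F"
  have finB: "finite ?B" using insert by (simp add: Bset_def)
  have BI: "Bset u v (insert w F) = insert ?a (insert ?b ?B)" by (auto simp: Bset_def)
  have aB: "?a \<notin> insert ?b ?B" using insert assms by (intro aux_aB) auto
  have bB: "?b \<notin> ?B" using insert assms by (intro aux_bB) auto
  have ab: "?a \<noteq> ?b" using aB by blast
  have key: "\<And>E X. E \<subseteq> ?B \<Longrightarrow> X \<subseteq> {?a, ?b} \<Longrightarrow>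
      bad u v (insert w F) (E \<union> X) \<longleftrightarrow> (?a \<in> X \<longleftrightarrow> ?b \<in> X) \<and> bad u v F E"
  proof -
    fix E X assume E: "E \<subseteq> ?B" and X: "X \<subseteq> {?a, ?b}"
    have nE: "?a \<notin> E" "?b \<notin> E" using E aB bB by auto
    have nX: "\<And>x. x \<in> F \<Longrightarrow> {u,x} \<notin> X \<and> {v,x} \<notin> X"
      using X insert assms by (intro aux_X) auto
    show "bad u v (insert w F) (E \<union> X) \<longleftrightarrow> (?a \<in> X \<longleftrightarrow> ?b \<in> X) \<and> bad u v F E"
      unfolding bad_def using nE nX by blast
  qed
  have "mu (Bset u v (insert w F)) p (bad u v (insert w F)) =
     p * (p * mu ?B p (\<lambda>E. bad u v (insert w F) (insert ?a (insert ?b E)))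
        + (1 - p) * mu ?B p (\<lambda>E. bad u v (insert w F) (insert ?a E)))
   + (1 - p) * (p * mu ?B p (\<lambda>E. bad u v (insert w F) (insert ?b E))
        + (1 - p) * mu ?B p (bad u v (insert w F)))"
    unfolding BI using finB aB bB by (simp add: mu_insert)
  also have "mu ?B p (\<lambda>E. bad u v (insert w F) (insert ?a (insert ?b E))) = mu ?B p (bad u v F)"
  proof (rule mu_cong)
    fix E assume "E \<subseteq> ?B" then show "bad u v (insert w F) (insert ?a (insert ?b E)) = bad u v F E"
      using key[of E "{?a,?b}"] by simp
  qed
  also have "mu ?B p (\<lambda>E. bad u v (insert w F) (insert ?a E)) = mu ?B p (\<lambda>_. False)"
  proof (rule mu_cong)
    fix E assume "E \<subseteq> ?B" then show "bad u v (insert w F) (insert ?a E) = False"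
      using key[of E "{?a}"] ab by simp
  qed
  also have "mu ?B p (\<lambda>E. bad u v (insert w F) (insert ?b E)) = mu ?B p (\<lambda>_. False)"
  proof (rule mu_cong)
    fix E assume "E \<subseteq> ?B" then show "bad u v (insert w F) (insert ?b E) = False"
      using key[of E "{?b}"] ab by simp
  qed
  also have "mu ?B p (bad u v (insert w F)) = mu ?B p (bad u v F)"
  proof (rule mu_cong)
    fix E assume "E \<subseteq> ?B" then show "bad u v (insert w F) E = bad u v F E"
      using key[of E "{}"] by simp
  qed
  finally show ?case using insert by (simp add: mu_False power2_eq_square algebra_simps)
qed



lemma gdist_0: "gdist E u v = 0 \<longleftrightarrow> u = v"
proof
  assume "u = v"
  then have ex: "\<exists>k. (u, v) \<in> (adj_rel E) ^^ k" by (intro exI[of _ 0]) simp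
  have "(LEAST k. (u, v) \<in> (adj_rel E) ^^ k) = 0" using \<open>u = v\<close> by (intro Least_eq_0) simp
  then show "gdist E u v = 0" using ex by (simp add: gdist_def zero_enat_def)
next
  assume g: "gdist E u v = 0"
  then have ex: "\<exists>k. (u, v) \<in> (adj_rel E) ^^ k" by (auto simp: gdist_def split: if_splits)
  then have "(LEAST k. (u, v) \<in> (adj_rel E) ^^ k) = 0" using g by (simp add: gdist_def zero_enat_def)
  moreover have "(u, v) \<in> (adj_rel E) ^^ (LEAST k. (u, v) \<in> (adj_rel E) ^^ k)" using ex by (rule LeastI_ex)
  ultimately show "u = v" by simp
qed

lemma gdist_1: assumes "u \<noteq> w" shows "gdist E u w = enat 1 \<longleftrightarrow> {u,w} \<in> E"
proof
  assume e: "{u,w} \<in> E"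
  then have r: "(u, w) \<in> (adj_rel E) ^^ 1" using assms by (simp add: adj_rel_def)
  have "(LEAST k. (u, w) \<in> (adj_rel E) ^^ k) = 1"
  proof (rule Least_equality)
    show "(u, w) \<in> (adj_rel E) ^^ 1" by (rule r)
    fix y assume "(u, w) \<in> (adj_rel E) ^^ y"
    then show "1 \<le> y" using assms by (cases y) auto
  qed
  moreover have "\<exists>k. (u, w) \<in> (adj_rel E) ^^ k" using r by blast
  ultimately show "gdist E u w = enat 1" unfolding gdist_def by simp
next
  assume g: "gdist E u w = enat 1"
  then have ex: "\<exists>k. (u, w) \<in> (adj_rel E) ^^ k" by (auto simp: gdist_def split: if_splits)
  then have "(LEAST k. (u, w) \<in> (adj_rel E) ^^ k) = 1" using g by (simp add: gdist_def)
  moreover have "(u, w) \<in> (adj_rel E) ^^ (LEAST k. (u, w) \<in> (adj_rel E) ^^ k)" using ex by (rule LeastI_ex)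
  ultimately show "{u,w} \<in> E" by (simp add: adj_rel_def)
qed

lemma resolving_if:
  assumes R: "R \<subseteq> {1..n}"
    and nb: "\<And>u v. u \<in> {1..n} - R \<Longrightarrow> v \<in> {1..n} - R \<Longrightarrow> u < v \<Longrightarrow> \<not> bad u v R E"
  shows "resolving n E R"
  unfolding resolving_def
proof (intro conjI R ballI impI)
  fix u v assume u: "u \<in> {1..n}" and v: "v \<in> {1..n}" and uv: "u \<noteq> v"
  show "\<exists>w\<in>R. gdist E u w \<noteq> gdist E v w"
  proof (cases "u \<in> R \<or> v \<in> R")
    case True
    then show ?thesis
    proof
      assume "u \<in> R"
      moreover have "gdist E u u \<noteq> gdist E v u" using uv gdist_0[of E u u] gdist_0[of E v u] by metis
      ultimately show ?thesis by blast
    next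
      assume "v \<in> R"
      moreover have "gdist E u v \<noteq> gdist E v v" using uv gdist_0[of E v v] gdist_0[of E u v] by metis
      ultimately show ?thesis by blast
    qed
  next
    case False
    have "\<not> bad u v R E"
    proof (cases "u < v")
      case True then show ?thesis using nb False u v by auto
    next
      case f: False
      then have "v < u" using uv by simp
      then have "\<not> bad v u R E" using nb False u v by auto
      then show ?thesis unfolding bad_def by blast
    qed
    then obtain w where w: "w \<in> R" "\<not> ({u,w} \<in> E \<longleftrightarrow> {v,w} \<in> E)" unfolding bad_def by blast
    have "u \<noteq> w" "v \<noteq> w" using w(1) False by auto
    then have "gdist E u w \<noteq> gdist E v w" using w(2) gdist_1[of u w E] gdist_1[of v w E] by metis
    then show ?thesis using w(1) by blast
  qed
qed

lemma finite_all_pairs: "finite (all_pairs n)"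
  by (rule finite_subset[of _ "Pow {1..n}"]) (auto simp: all_pairs_def)

lemma mu_bad_all:
  assumes "u \<in> {1..n} - R" "v \<in> {1..n} - R" "u \<noteq> v" "R \<subseteq> {1..n}"
  shows "mu (all_pairs n) p (bad u v R) = (p^2 + (1-p)^2) ^ card R"
proof -
  have finR: "finite R" using assms(4) finite_subset by blast
  have sub: "Bset u v R \<subseteq> all_pairs n"
    using assms unfolding Bset_def all_pairs_def by blast
  have eq: "all_pairs n = Bset u v R \<union> (all_pairs n - Bset u v R)" using sub by blast
  have "mu (all_pairs n) p (bad u v R) = mu (Bset u v R) p (bad u v R)"
  proof (subst eq, rule mu_restrict)
    show "finite (all_pairs n - Bset u v R)" using finite_all_pairs by blast
    show "finite (Bset u v R)" using finR by (simp add: Bset_def)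
    show "Bset u v R \<inter> (all_pairs n - Bset u v R) = {}" by blast
    fix c E assume c: "c \<in> all_pairs n - Bset u v R"
    then have "\<forall>w\<in>R. c \<noteq> {u,w} \<and> c \<noteq> {v,w}" unfolding Bset_def by blast
    then show "bad u v R (insert c E) = bad u v R E" unfolding bad_def by auto
  qed
  also have "\<dots> = (p^2 + (1-p)^2) ^ card R" using mu_bad[OF assms(3) finR] assms by auto
  finally show ?thesis .
qed



lemma part1:
  fixes p :: real
  assumes p: "0 < p" "p < 1" and n: "n \<ge> 2" and R: "R \<subseteq> {1..n}"
    and k: "real (card R) \<ge> - 3 * ln (real n) / ln (p\<^sup>2 + (1 - p)\<^sup>2)"
  shows "gnp_prob n p (\<lambda>E. resolving n E R) \<ge> 1 - 1 / (2 * real n)"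
proof -
  define r where "r = p\<^sup>2 + (1 - p)\<^sup>2"
  have r0: "0 < r" unfolding r_def using p by (simp add: add_pos_nonneg)
  have "r = 1 - 2 * (p * (1 - p))" unfolding r_def by (simp add: power2_eq_square algebra_simps)
  moreover have "p * (1 - p) > 0" using p by simp
  ultimately have r1: "r < 1" by linarith
  have lnr: "ln r < 0" using r0 r1 by simp
  have n0: "real n > 0" using n by simp
  have lnn: "ln (real n) > 0" using n by simp
  have k': "- 3 * ln (real n) / ln r \<le> real (card R)" using k unfolding r_def .
  have "real (card R) * ln r \<le> (- 3 * ln (real n) / ln r) * ln r"
    by (rule mult_right_mono_neg[OF k']) (use lnr in simp)
  also have "\<dots> = - 3 * ln (real n)" using lnr by simp
  finally have "real (card R) * ln r \<le> - 3 * ln (real n)" .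
  then have "ln (r ^ card R) \<le> ln (1 / real n ^ 3)"
    using r0 n0 by (simp add: ln_realpow ln_div)
  then have rk: "r ^ card R \<le> 1 / real n ^ 3"
    using r0 n0 by (subst (asm) ln_le_cancel_iff) auto
  define Pairs where "Pairs = {(u,v). u \<in> {1..n} - R \<and> v \<in> {1..n} - R \<and> u < v}"
  have PS: "Pairs \<subseteq> {1..n} \<times> {1..n}" unfolding Pairs_def by auto
  have finP: "finite Pairs" using PS finite_subset by blast
  have cP: "2 * card Pairs \<le> n * n"
  proof -
    have "card (Pairs \<union> prod.swap ` Pairs) = card Pairs + card (prod.swap ` Pairs)"
      by (rule card_Un_disjoint) (use finP in \<open>auto simp: Pairs_def\<close>)
    moreover have "card (prod.swap ` Pairs) = card Pairs" by (rule card_image) simp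
    moreover have "card (Pairs \<union> prod.swap ` Pairs) \<le> card ({1..n} \<times> {1..n})"
      by (rule card_mono) (use PS in auto)
    ultimately show ?thesis by (simp add: card_cartesian_product)
  qed
  have fA: "finite (all_pairs n)" by (rule finite_all_pairs)
  have "mu (all_pairs n) p (\<lambda>E. \<not> resolving n E R)
      \<le> mu (all_pairs n) p (\<lambda>E. \<exists>x\<in>Pairs. bad (fst x) (snd x) R E)"
  proof (rule mu_mono)
    fix E assume "E \<subseteq> all_pairs n" and nr: "\<not> resolving n E R"
    show "\<exists>x\<in>Pairs. bad (fst x) (snd x) R E"
    proof (rule ccontr)
      assume h: "\<not> (\<exists>x\<in>Pairs. bad (fst x) (snd x) R E)"
      have "resolving n E R"
      proof (rule resolving_if[OF R])
        fix u v assume "u \<in> {1..n} - R" "v \<in> {1..n} - R" "u < v"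
        then have "(u,v) \<in> Pairs" unfolding Pairs_def by simp
        then show "\<not> bad u v R E" using h by fastforce
      qed
      then show False using nr by simp
    qed
  qed (use p fA in auto)
  also have "\<dots> \<le> (\<Sum>x\<in>Pairs. mu (all_pairs n) p (bad (fst x) (snd x) R))"
    by (rule mu_Ex_le) (use p fA finP in auto)
  also have "\<dots> = (\<Sum>x\<in>Pairs. r ^ card R)"
  proof (rule sum.cong[OF refl])
    fix x assume "x \<in> Pairs"
    then show "mu (all_pairs n) p (bad (fst x) (snd x) R) = r ^ card R"
      unfolding r_def Pairs_def using R by (intro mu_bad_all) auto
  qed
  also have "\<dots> = real (card Pairs) * r ^ card R" by simp
  also have "\<dots> \<le> (real n * real n / 2) * (1 / real n ^ 3)"
  proof (rule mult_mono)
    have "real (2 * card Pairs) \<le> real (n * n)" using cP by (rule of_nat_mono)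
    then show "real (card Pairs) \<le> real n * real n / 2" by simp
  qed (use rk r0 in auto)
  also have "\<dots> = 1 / (2 * real n)" using n0 by (simp add: field_simps power3_eq_cube)
  finally have bad_le: "mu (all_pairs n) p (\<lambda>E. \<not> resolving n E R) \<le> 1 / (2 * real n)" .
  have "gnp_prob n p (\<lambda>E. resolving n E R) = 1 - mu (all_pairs n) p (\<lambda>E. \<not> resolving n E R)"
    using mu_compl[OF fA, of p "\<lambda>E. resolving n E R"] unfolding gnp_prob_def mu_def[symmetric] by linarith
  then show ?thesis using bad_le by simp
qed

lemma mu_le1: "0 \<le> p \<Longrightarrow> p \<le> 1 \<Longrightarrow> finite A \<Longrightarrow> mu A p P \<le> 1"
  using mu_mono[of p A P "\<lambda>_. True"] mu_True[of A p] by simp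

theorem corollary4p4:
  fixes p :: real
  assumes "0 < p" "p < 1"
  shows "(\<forall>n::nat. \<forall>R::nat set. n \<ge> 2 \<longrightarrow> R \<subseteq> {1..n} \<longrightarrow>
            real (card R) \<ge> - 3 * ln (real n) / ln (p\<^sup>2 + (1 - p)\<^sup>2) \<longrightarrow>
            gnp_prob n p (\<lambda>E. resolving n E R) \<ge> 1 - 1 / (2 * real n))
       \<and> ((\<lambda>n. gnp_prob n p (\<lambda>E. real (metric_dim n E)
              \<le> real_of_int \<lceil>- 3 * ln (real n) / ln (p\<^sup>2 + (1 - p)\<^sup>2)\<rceil>)) \<longlonglongrightarrow> 1)"
proof (intro conjI allI impI)
  fix n :: nat and R :: "nat set"
  assume "n \<ge> 2" "R \<subseteq> {1..n}" "real (card R) \<ge> - 3 * ln (real n) / ln (p\<^sup>2 + (1 - p)\<^sup>2)"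
  then show "gnp_prob n p (\<lambda>E. resolving n E R) \<ge> 1 - 1 / (2 * real n)"
    using part1 assms by blast
next
  define r where "r = p\<^sup>2 + (1 - p)\<^sup>2"
  have r0: "0 < r" unfolding r_def using assms by (simp add: add_pos_nonneg)
  have "r = 1 - 2 * (p * (1 - p))" unfolding r_def by (simp add: power2_eq_square algebra_simps)
  moreover have "p * (1 - p) > 0" using assms by simp
  ultimately have r1: "r < 1" by linarith
  have lnr: "ln r < 0" using r0 r1 by simp
  define c where "c = - 3 / ln r"
  have c0: "c > 0" unfolding c_def using lnr by (simp add: divide_neg_neg)
  define f where "f = (\<lambda>n::nat. - 3 * ln (real n) / ln r)"
  have fc: "f n = c * ln (real n)" for n unfolding f_def c_def by simp
  have lim: "(\<lambda>n. ln (real n) / real n) \<longlonglongrightarrow> 0"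
    by (rule filterlim_compose[OF ln_x_over_x_tendsto_0 filterlim_real_sequentially])
  have ev1: "eventually (\<lambda>n. ln (real n) / real n < 1 / (2 * c)) sequentially"
    by (rule order_tendstoD(2)[OF lim]) (use c0 in simp)
  have ev: "eventually (\<lambda>n. n \<ge> 2 \<and> 0 \<le> f n \<and> f n \<le> real n) sequentially"
    using ev1 eventually_ge_at_top[of "2::nat"]
  proof eventually_elim
    case (elim n)
    have n0: "real n > 0" using elim by simp
    have "ln (real n) < (1 / (2 * c)) * real n" using elim n0 by (simp add: pos_divide_less_eq)
    then have "c * ln (real n) < c * ((1 / (2 * c)) * real n)" by (rule mult_strict_left_mono[OF _ c0])
    also have "\<dots> = real n / 2" using c0 by simp
    finally have "c * ln (real n) < real n / 2" .
    moreover have "0 \<le> c * ln (real n)" using c0 elim by simp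
    ultimately show ?case using elim fc[of n] by simp
  qed
  let ?g = "\<lambda>n. gnp_prob n p (\<lambda>E. real (metric_dim n E)
              \<le> real_of_int \<lceil>- 3 * ln (real n) / ln (p\<^sup>2 + (1 - p)\<^sup>2)\<rceil>)"
  have lower: "eventually (\<lambda>n. 1 - 1 / (2 * real n) \<le> ?g n) sequentially"
    using ev
  proof eventually_elim
    case (elim n)
    define K where "K = nat \<lceil>f n\<rceil>"
    have Kf: "real K = of_int \<lceil>f n\<rceil>" unfolding K_def using elim by simp
    have Kn: "K \<le> n" unfolding K_def using elim by (simp add: ceiling_le_iff nat_le_iff)
    have R: "{1..K} \<subseteq> {1..n}" using Kn by auto
    have cR: "real (card {1..K}) \<ge> - 3 * ln (real n) / ln (p\<^sup>2 + (1 - p)\<^sup>2)"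
      using Kf le_of_int_ceiling[of "f n"] unfolding f_def r_def by simp
    have "1 - 1 / (2 * real n) \<le> gnp_prob n p (\<lambda>E. resolving n E {1..K})"
      using part1[OF assms elim[THEN conjunct1] R cR] .
    also have "\<dots> \<le> ?g n"
      unfolding gnp_prob_def mu_def[symmetric]
    proof (rule mu_mono)
      fix E assume "resolving n E {1..K}"
      then have "metric_dim n E \<le> K" unfolding metric_dim_def
        by (intro Least_le) auto
      then show "real (metric_dim n E) \<le> real_of_int \<lceil>- 3 * ln (real n) / ln (p\<^sup>2 + (1 - p)\<^sup>2)\<rceil>"
        using Kf unfolding f_def r_def by linarith
    qed (use assms finite_all_pairs in auto)
    finally show ?case .
  qed
  have upper: "eventually (\<lambda>n. ?g n \<le> 1) sequentially"
    by (intro always_eventually allI, unfold gnp_prob_def mu_def[symmetric], rule mu_le1)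
      (use assms finite_all_pairs in auto)
  have l1: "(\<lambda>n. 1 - 1 / (2 * real n)) \<longlonglongrightarrow> 1"
  proof -
    have "(\<lambda>n. 1 - (1/2) / real n) \<longlonglongrightarrow> 1 - 0"
      by (intro tendsto_diff tendsto_const lim_const_over_n)
    then show ?thesis by simp
  qed
  show "?g \<longlonglongrightarrow> 1"
    by (rule tendsto_sandwich[OF lower upper l1 tendsto_const])
qed

end
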